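(* Let $X$ be a real Banach space and $A: X\rightrightarrows X^*$ a maximal monotone operator with $\mathcal{F}_A=\{F_A\}$. Then for every $\lambda_1,\lambda_2>0$ and $(w,w^* )\in X\times X^*$, the operator $\widehat{A}$ with graph \[ \mathrm{Gr}(\widehat{A}) = \{(\lambda_1 x - w,\ \lambda_2 x^* - w^* ): (x,x^* )\in\mathrm{Gr}(A)\} \] is maximal monotone and satisfies $\mathcal{F}_{\widehat{A}} = \{F_{\widehat{A}}\}$.
   Context: For a maximal monotone $A$, a representative function is a proper convex lsc $h: X\times X^*\to\mathbb{R}\cup\{+\infty\}$ with $h(x,x^* )\ge\langle x,x^*\rangle$ for all $(x,x^* )$ and equality on $\mathrm{Gr}(A)$; $\mathcal{F}_A$ is the set of all such functions. $F_A(x,x^* ) = \sup_{(y,y^* )\in\mathrm{Gr}(A)}\{\langle y,x^*\rangle + \langle x,y^*\rangle - \langle y,y^*\rangle\}$ is the Fitzpatrick function. *)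

theory Defs
  imports "HOL-Analysis.Analysis"
begin

(* The dual space X* is modelled as the space of bounded linear functionals
  'a <Rightarrow><^sub>L real; the duality pairing is blinfun_apply. A (set-valued) operator
  A : X <rightrightarrows> X* is identified with its graph, a subset of X <times> X*. *)

definition pairing :: "'a::real_normed_vector \<Rightarrow> ('a \<Rightarrow>\<^sub>L real) \<Rightarrow> real" where
  "pairing x xs = blinfun_apply xs x"

definition monotone_op :: "('a::real_normed_vector \<times> ('a \<Rightarrow>\<^sub>L real)) set \<Rightarrow> bool" where
  "monotone_op G \<longleftrightarrow>
     (\<forall>(x, xs)\<in>G. \<forall>(y, ys)\<in>G. pairing (x - y) (xs - ys) \<ge> 0)"

definition maximal_monotone :: "('a::real_normed_vector \<times> ('a \<Rightarrow>\<^sub>L real)) set \<Rightarrow> bool" where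
  "maximal_monotone G \<longleftrightarrow> monotone_op G \<and> (\<forall>G'. monotone_op G' \<and> G \<subseteq> G' \<longrightarrow> G' = G)"

definition proper_fun :: "('b \<Rightarrow> ereal) \<Rightarrow> bool" where
  "proper_fun h \<longleftrightarrow> (\<forall>p. h p \<noteq> -\<infinity>) \<and> (\<exists>p. h p \<noteq> \<infinity>)"

definition convex_efun :: "('b::real_vector \<Rightarrow> ereal) \<Rightarrow> bool" where
  "convex_efun h \<longleftrightarrow>
     (\<forall>p q. \<forall>t::real. 0 < t \<and> t < 1 \<longrightarrow>
        h (t *\<^sub>R p + (1 - t) *\<^sub>R q) \<le> ereal t * h p + ereal (1 - t) * h q)"

(* Lower semicontinuity (w.r.t. the norm topology): all sublevel sets are closed. *)
definition lsc_efun :: "('b::topological_space \<Rightarrow> ereal) \<Rightarrow> bool" where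
  "lsc_efun h \<longleftrightarrow> (\<forall>c::ereal. closed {p. h p \<le> c})"

definition representative_functions ::
  "('a::real_normed_vector \<times> ('a \<Rightarrow>\<^sub>L real)) set \<Rightarrow> ('a \<times> ('a \<Rightarrow>\<^sub>L real) \<Rightarrow> ereal) set" where
  "representative_functions G =
     {h. proper_fun h \<and> convex_efun h \<and> lsc_efun h
         \<and> (\<forall>x xs. h (x, xs) \<ge> ereal (pairing x xs))
         \<and> (\<forall>(x, xs)\<in>G. h (x, xs) = ereal (pairing x xs))}"

definition fitzpatrick ::
  "('a::real_normed_vector \<times> ('a \<Rightarrow>\<^sub>L real)) set \<Rightarrow> 'a \<times> ('a \<Rightarrow>\<^sub>L real) \<Rightarrow> ereal" where
  "fitzpatrick G = (\<lambda>(x, xs). SUP (y, ys)\<in>G. ereal (pairing y xs + pairing x ys - pairing y ys))"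

end

theory Submission
  imports Defs
begin


lemma pairing_cont: "continuous_on UNIV (\<lambda>p::('a::real_normed_vector \<times> ('a \<Rightarrow>\<^sub>L real)). pairing y (snd p) + pairing (fst p) ys - c)"
  unfolding pairing_def by (intro continuous_intros)

lemma closed_ereal_le:
  fixes f :: "'b::topological_space \<Rightarrow> real"
  assumes "continuous_on UNIV f"
  shows "closed {p. ereal (f p) \<le> c}"
proof (cases c)
  case (real r)
  then show ?thesis using closed_Collect_le[OF assms continuous_on_const, of r] by simp
qed auto

lemma maxmono_nonempty:
  assumes "maximal_monotone G" shows "G \<noteq> {}"
proof
  assume "G = {}"
  have "monotone_op {(0, 0)}" unfolding monotone_op_def pairing_def by simp
  with assms \<open>G = {}\<close> show False unfolding maximal_monotone_def by blast
qed

lemma pairing_expand: "pairing (x - y) (xs - ys) = pairing x xs - pairing x ys - pairing y xs + pairing y ys"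
  unfolding pairing_def by (simp add: blinfun.diff_left blinfun.diff_right)

lemma fitz_ge:
  assumes "maximal_monotone G"
  shows "fitzpatrick G (x, xs) \<ge> ereal (pairing x xs)"
proof (rule ccontr)
  assume "\<not> ?thesis"
  hence lt: "fitzpatrick G (x, xs) < ereal (pairing x xs)" by simp
  have pos: "pairing (x - y) (xs - ys) > 0" if "(y, ys) \<in> G" for y ys
  proof -
    have "ereal (pairing y xs + pairing x ys - pairing y ys) \<le> fitzpatrick G (x, xs)"
      unfolding fitzpatrick_def using that by (auto intro!: SUP_upper2)
    from le_less_trans[OF this lt] have "pairing y xs + pairing x ys - pairing y ys < pairing x xs" by simp
    thus ?thesis by (simp add: pairing_expand)
  qed
  have mG: "monotone_op G" using assms unfolding maximal_monotone_def by blast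
  have "monotone_op (insert (x, xs) G)"
    unfolding monotone_op_def
  proof (intro ballI, clarify)
    fix a as b bs
    assume a: "(a, as) \<in> insert (x, xs) G" and b: "(b, bs) \<in> insert (x, xs) G"
    show "0 \<le> pairing (a - b) (as - bs)"
    proof (cases "(a, as) = (x, xs)")
      case True
      show ?thesis
      proof (cases "(b, bs) = (x, xs)")
        case True2: True
        with True show ?thesis by (simp add: pairing_def)
      next
        case False
        with b have "(b, bs) \<in> G" by blast
        from pos[OF this] True show ?thesis by simp
      qed
    next
      case False
      with a have aG: "(a, as) \<in> G" by blast
      show ?thesis
      proof (cases "(b, bs) = (x, xs)")
        case True
        from pos[OF aG] True have "pairing (x - a) (xs - as) > 0" by simp
        moreover have "pairing (a - x) (as - xs) = pairing (x - a) (xs - as)"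
          by (simp add: pairing_expand)
        ultimately show ?thesis using True by simp
      next
        case False
        with b have "(b, bs) \<in> G" by blast
        with aG mG show ?thesis unfolding monotone_op_def by blast
      qed
    qed
  qed
  with assms have "(x, xs) \<in> G" unfolding maximal_monotone_def by blast
  hence "ereal (pairing x xs + pairing x xs - pairing x xs) \<le> fitzpatrick G (x, xs)"
    unfolding fitzpatrick_def by (auto intro!: SUP_upper2)
  with lt show False by simp
qed

lemma fitz_eq:
  assumes "maximal_monotone G" "(x, xs) \<in> G"
  shows "fitzpatrick G (x, xs) = ereal (pairing x xs)"
proof (rule antisym)
  have mG: "monotone_op G" using assms unfolding maximal_monotone_def by blast
  show "fitzpatrick G (x, xs) \<le> ereal (pairing x xs)"
    unfolding fitzpatrick_def prod.case
  proof (rule SUP_least, clarify)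
    fix y ys assume "(y, ys) \<in> G"
    with mG assms(2) have "0 \<le> pairing (x - y) (xs - ys)" unfolding monotone_op_def by blast
    thus "ereal (pairing y xs + pairing x ys - pairing y ys) \<le> ereal (pairing x xs)"
      by (simp add: pairing_expand)
  qed
qed (rule fitz_ge[OF assms(1)])

lemma ereal_aff_le:
  assumes "0 \<le> t" "t \<le> 1" "ereal a \<le> P" "ereal b \<le> Q"
  shows "ereal (t * a + (1 - t) * b) \<le> ereal t * P + ereal (1 - t) * Q"
proof -
  have "ereal (t * a + (1 - t) * b) = ereal t * ereal a + ereal (1 - t) * ereal b" by simp
  also have "\<dots> \<le> ereal t * P + ereal (1 - t) * Q"
    using assms by (intro add_mono ereal_mult_left_mono) auto
  finally show ?thesis .
qed

lemma fitz_rep: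
  assumes "maximal_monotone G"
  shows "fitzpatrick G \<in> representative_functions G"
  unfolding representative_functions_def
proof (intro CollectI conjI allI ballI)
  obtain x xs where xG: "(x, xs) \<in> G" using maxmono_nonempty[OF assms] by auto
  show "proper_fun (fitzpatrick G)"
    unfolding proper_fun_def
  proof (intro conjI allI exI)
    fix p :: "'a \<times> ('a \<Rightarrow>\<^sub>L real)"
    obtain a as where p: "p = (a, as)" by fastforce
    show "fitzpatrick G p \<noteq> -\<infinity>" using fitz_ge[OF assms, of a as] p by auto
  next
    show "fitzpatrick G (x, xs) \<noteq> \<infinity>" using fitz_eq[OF assms xG] by simp
  qed
  show "convex_efun (fitzpatrick G)"
    unfolding convex_efun_def
  proof (intro allI impI)
    fix p q :: "'a \<times> ('a \<Rightarrow>\<^sub>L real)" and t :: real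
    assume t: "0 < t \<and> t < 1"
    obtain a as where p: "p = (a, as)" by fastforce
    obtain b bs where q: "q = (b, bs)" by fastforce
    show "fitzpatrick G (t *\<^sub>R p + (1 - t) *\<^sub>R q) \<le> ereal t * fitzpatrick G p + ereal (1 - t) * fitzpatrick G q"
      unfolding p q fitzpatrick_def
    proof (simp only: scaleR_Pair plus_prod_def fst_conv snd_conv case_prod_conv, rule SUP_least, clarify)
      fix y ys assume yG: "(y, ys) \<in> G"
      have e: "pairing y (t *\<^sub>R as + (1 - t) *\<^sub>R bs) + pairing (t *\<^sub>R a + (1 - t) *\<^sub>R b) ys - pairing y ys
          = t * (pairing y as + pairing a ys - pairing y ys) + (1 - t) * (pairing y bs + pairing b ys - pairing y ys)"
        unfolding pairing_def by (simp add: blinfun.add_left blinfun.add_right blinfun.scaleR_left blinfun.scaleR_right, simp add: algebra_simps)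
      show "ereal (pairing y (t *\<^sub>R as + (1 - t) *\<^sub>R bs) + pairing (t *\<^sub>R a + (1 - t) *\<^sub>R b) ys - pairing y ys)
          \<le> ereal t * (SUP (y, ys)\<in>G. ereal (pairing y as + pairing a ys - pairing y ys)) +
             ereal (1 - t) * (SUP (y, ys)\<in>G. ereal (pairing y bs + pairing b ys - pairing y ys))"
        unfolding e using t yG by (intro ereal_aff_le) (auto intro!: SUP_upper2)
    qed
  qed
  show "lsc_efun (fitzpatrick G)"
    unfolding lsc_efun_def
  proof
    fix c :: ereal
    have "{p. fitzpatrick G p \<le> c} = (\<Inter>(y, ys)\<in>G. {p. ereal (pairing y (snd p) + pairing (fst p) ys - pairing y ys) \<le> c})"
      unfolding fitzpatrick_def by (auto simp: SUP_le_iff split: prod.splits)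
    also have "closed \<dots>"
      by (intro closed_INT ballI) (auto intro!: closed_ereal_le pairing_cont)
    finally show "closed {p. fitzpatrick G p \<le> c}" .
  qed
  fix a as
  show "ereal (pairing a as) \<le> fitzpatrick G (a, as)" by (rule fitz_ge[OF assms])
next
  fix p assume "p \<in> G"
  then show "case p of (x, xs) \<Rightarrow> fitzpatrick G (x, xs) = ereal (pairing x xs)"
    using fitz_eq[OF assms] by auto
qed

definition Tm :: "real \<Rightarrow> real \<Rightarrow> 'a::real_normed_vector \<Rightarrow> ('a \<Rightarrow>\<^sub>L real) \<Rightarrow> 'a \<times> ('a \<Rightarrow>\<^sub>L real) \<Rightarrow> 'a \<times> ('a \<Rightarrow>\<^sub>L real)" where
  "Tm l1 l2 w ws = (\<lambda>(x, xs). (l1 *\<^sub>R x - w, l2 *\<^sub>R xs - ws))"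

definition Ti :: "real \<Rightarrow> real \<Rightarrow> 'a::real_normed_vector \<Rightarrow> ('a \<Rightarrow>\<^sub>L real) \<Rightarrow> 'a \<times> ('a \<Rightarrow>\<^sub>L real) \<Rightarrow> 'a \<times> ('a \<Rightarrow>\<^sub>L real)" where
  "Ti l1 l2 w ws = (\<lambda>(u, us). ((1 / l1) *\<^sub>R (u + w), (1 / l2) *\<^sub>R (us + ws)))"

definition cc :: "real \<Rightarrow> real \<Rightarrow> 'a::real_normed_vector \<Rightarrow> ('a \<Rightarrow>\<^sub>L real) \<Rightarrow> 'a \<times> ('a \<Rightarrow>\<^sub>L real) \<Rightarrow> real" where
  "cc l1 l2 w ws = (\<lambda>(x, xs). pairing x ws / l2 + pairing w xs / l1 - pairing w ws / (l1 * l2))"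

definition kk :: "real \<Rightarrow> real \<Rightarrow> 'a::real_normed_vector \<Rightarrow> ('a \<Rightarrow>\<^sub>L real) \<Rightarrow> ('a \<times> ('a \<Rightarrow>\<^sub>L real) \<Rightarrow> ereal) \<Rightarrow> 'a \<times> ('a \<Rightarrow>\<^sub>L real) \<Rightarrow> ereal" where
  "kk l1 l2 w ws h = (\<lambda>p. ereal (1 / (l1 * l2)) * h (Tm l1 l2 w ws p) + ereal (cc l1 l2 w ws p))"

lemma Tm_Ti: "l1 > 0 \<Longrightarrow> l2 > 0 \<Longrightarrow> Tm l1 l2 w ws (Ti l1 l2 w ws q) = q"
  unfolding Tm_def Ti_def by (auto split: prod.splits)

lemma Ti_Tm: "l1 > 0 \<Longrightarrow> l2 > 0 \<Longrightarrow> Ti l1 l2 w ws (Tm l1 l2 w ws q) = q"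
  unfolding Tm_def Ti_def by (auto split: prod.splits)

lemma Tm_aff: "Tm l1 l2 w ws (t *\<^sub>R p + (1 - t) *\<^sub>R q) = t *\<^sub>R Tm l1 l2 w ws p + (1 - t) *\<^sub>R Tm l1 l2 w ws q"
  unfolding Tm_def by (auto split: prod.splits simp: algebra_simps)

lemma cc_aff: "cc l1 l2 w ws (t *\<^sub>R p + (1 - t) *\<^sub>R q) = t * cc l1 l2 w ws p + (1 - t) * cc l1 l2 w ws q"
  unfolding cc_def pairing_def
  by (auto split: prod.splits simp: blinfun.add_left blinfun.add_right blinfun.scaleR_left blinfun.scaleR_right)
     (simp add: algebra_simps diff_divide_distrib add_divide_distrib)

lemma pairing_Tm:
  assumes "l1 > 0" "l2 > 0"
  shows "pairing (l1 *\<^sub>R x - w) (l2 *\<^sub>R xs - ws) / (l1 * l2) + cc l1 l2 w ws (x, xs) = pairing x xs"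
  using assms unfolding cc_def pairing_def
  by (simp add: blinfun.diff_left blinfun.diff_right blinfun.scaleR_left blinfun.scaleR_right field_simps)

lemma Tm_cont: "continuous_on UNIV (Tm l1 l2 w ws)"
  unfolding Tm_def case_prod_beta by (intro continuous_intros)

lemma cc_cont: "l1 > 0 \<Longrightarrow> l2 > 0 \<Longrightarrow> continuous_on UNIV (cc l1 l2 w ws)"
  unfolding cc_def case_prod_beta pairing_def by (intro continuous_intros) auto

lemma lsc_epi:
  fixes h :: "'b::metric_space \<Rightarrow> ereal"
  assumes "lsc_efun h"
  shows "closed {z. h (fst z) \<le> ereal (snd z)}"
  unfolding closed_sequential_limits
proof (intro allI impI, elim conjE)
  fix z :: "nat \<Rightarrow> 'b \<times> real" and l
  assume zS: "\<forall>n. z n \<in> {z. h (fst z) \<le> ereal (snd z)}" and lim: "z \<longlonglongrightarrow> l"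
  have l1: "(\<lambda>n. fst (z n)) \<longlonglongrightarrow> fst l" using lim by (rule tendsto_fst)
  have l2: "(\<lambda>n. snd (z n)) \<longlonglongrightarrow> snd l" using lim by (rule tendsto_snd)
  have "h (fst l) \<le> ereal (snd l)"
  proof (rule ereal_le_epsilon2)
    fix e :: real assume e: "0 < e"
    have ev: "eventually (\<lambda>n. snd (z n) < snd l + e) sequentially"
      using order_tendstoD(2)[OF l2, of "snd l + e"] e by simp
    have "eventually (\<lambda>n. fst (z n) \<in> {p. h p \<le> ereal (snd l + e)}) sequentially"
      using ev
    proof (rule eventually_mono)
      fix n assume "snd (z n) < snd l + e"
      with zS[rule_format, of n] show "fst (z n) \<in> {p. h p \<le> ereal (snd l + e)}"
        by (auto elim!: order_trans)
    qed
    from Lim_in_closed_set[OF _ this _ l1] assms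
    have "h (fst l) \<le> ereal (snd l + e)" unfolding lsc_efun_def by auto
    thus "h (fst l) \<le> ereal (snd l) + ereal e" by simp
  qed
  thus "l \<in> {z. h (fst z) \<le> ereal (snd z)}" by simp
qed

lemma ereal_conv_eq:
  fixes a b :: ereal and m t c1 c2 :: real
  assumes "a \<noteq> -\<infinity>" "b \<noteq> -\<infinity>" "m > 0" "0 < t" "t < 1"
  shows "ereal m * (ereal t * a + ereal (1 - t) * b) + ereal (t * c1 + (1 - t) * c2)
     = ereal t * (ereal m * a + ereal c1) + ereal (1 - t) * (ereal m * b + ereal c2)"
  using assms by (cases a; cases b) (auto simp: algebra_simps)

lemma ereal_sub_iff:
  fixes H :: ereal and m r c :: real
  assumes "H \<noteq> -\<infinity>" "m > 0"
  shows "ereal m * H + ereal c \<le> ereal r \<longleftrightarrow> H \<le> ereal ((r - c) / m)"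
  using assms by (cases H) (auto simp: field_simps)



lemma kk_rep:
  fixes G :: "('a::real_normed_vector \<times> ('a \<Rightarrow>\<^sub>L real)) set"
  assumes l: "l1 > 0" "l2 > 0" and h: "h \<in> representative_functions (Tm l1 l2 w ws ` G)"
  shows "kk l1 l2 w ws h \<in> representative_functions G"
proof -
  let ?T = "Tm l1 l2 w ws" and ?c = "cc l1 l2 w ws" and ?m = "1 / (l1 * l2)"
  have m: "?m > 0" using l by simp
  have hp: "proper_fun h" and hc: "convex_efun h" and hl: "lsc_efun h"
    and hge: "\<And>x xs. h (x, xs) \<ge> ereal (pairing x xs)"
    and heq: "\<And>x xs. (x, xs) \<in> ?T ` G \<Longrightarrow> h (x, xs) = ereal (pairing x xs)"
    using h unfolding representative_functions_def by auto
  have nm: "h q \<noteq> -\<infinity>" for q using hp unfolding proper_fun_def by blast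
  have knm: "kk l1 l2 w ws h p \<noteq> -\<infinity>" for p
    unfolding kk_def using nm[of "?T p"] m by (cases "h (?T p)") auto
  have "proper_fun (kk l1 l2 w ws h)"
    unfolding proper_fun_def
  proof (intro conjI allI)
    obtain q where q: "h q \<noteq> \<infinity>" using hp unfolding proper_fun_def by auto
    have "kk l1 l2 w ws h (Ti l1 l2 w ws q) \<noteq> \<infinity>"
      unfolding kk_def Tm_Ti[OF l] using q nm[of q] m by (cases "h q") auto
    thus "\<exists>p. kk l1 l2 w ws h p \<noteq> \<infinity>" by blast
  qed (rule knm)
  moreover have "convex_efun (kk l1 l2 w ws h)"
    unfolding convex_efun_def
  proof (intro allI impI)
    fix p q :: "'a \<times> ('a \<Rightarrow>\<^sub>L real)" and t :: real
    assume t: "0 < t \<and> t < 1"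
    have "kk l1 l2 w ws h (t *\<^sub>R p + (1 - t) *\<^sub>R q)
        = ereal ?m * h (t *\<^sub>R ?T p + (1 - t) *\<^sub>R ?T q) + ereal (t * ?c p + (1 - t) * ?c q)"
      unfolding kk_def Tm_aff cc_aff ..
    also have "\<dots> \<le> ereal ?m * (ereal t * h (?T p) + ereal (1 - t) * h (?T q)) + ereal (t * ?c p + (1 - t) * ?c q)"
      using hc[unfolded convex_efun_def, rule_format, of t "?T p" "?T q"] t m by (intro add_right_mono ereal_mult_left_mono) auto
    also have "\<dots> = ereal t * kk l1 l2 w ws h p + ereal (1 - t) * kk l1 l2 w ws h q"
      unfolding kk_def using t m nm by (intro ereal_conv_eq) auto
    finally show "kk l1 l2 w ws h (t *\<^sub>R p + (1 - t) *\<^sub>R q) \<le> ereal t * kk l1 l2 w ws h p + ereal (1 - t) * kk l1 l2 w ws h q" .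
  qed
  moreover have "lsc_efun (kk l1 l2 w ws h)"
    unfolding lsc_efun_def
  proof
    fix c :: ereal
    show "closed {p. kk l1 l2 w ws h p \<le> c}"
    proof (cases c)
      case (real r)
      have "{p. kk l1 l2 w ws h p \<le> c} = (\<lambda>p. (?T p, (r - ?c p) / ?m)) -` {z. h (fst z) \<le> ereal (snd z)}"
        unfolding real kk_def using ereal_sub_iff[OF nm m] by auto
      also have "closed \<dots>"
        using lsc_epi[OF hl] Tm_cont[of l1 l2 w ws] cc_cont[OF l, of w ws] m
        by (intro continuous_closed_vimage) (auto intro!: continuous_intros simp: continuous_on_eq_continuous_at)
      finally show ?thesis .
    next
      case PInf then show ?thesis by simp
    next
      case MInf then show ?thesis using knm by simp
    qed
  qed
  moreover have "kk l1 l2 w ws h (x, xs) \<ge> ereal (pairing x xs)" for x xs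
  proof -
    have "ereal (pairing x xs) = ereal ?m * ereal (pairing (l1 *\<^sub>R x - w) (l2 *\<^sub>R xs - ws)) + ereal (?c (x, xs))"
      using pairing_Tm[OF l, of x w xs ws] by simp
    also have "\<dots> \<le> kk l1 l2 w ws h (x, xs)"
      unfolding kk_def Tm_def prod.case using m hge by (intro add_right_mono ereal_mult_left_mono) auto
    finally show ?thesis .
  qed
  moreover have "kk l1 l2 w ws h (x, xs) = ereal (pairing x xs)" if "(x, xs) \<in> G" for x xs
  proof -
    have "?T (x, xs) \<in> ?T ` G" using that by blast
    hence "h (?T (x, xs)) = ereal (pairing (l1 *\<^sub>R x - w) (l2 *\<^sub>R xs - ws))"
      using heq unfolding Tm_def by auto
    thus ?thesis unfolding kk_def using pairing_Tm[OF l, of x w xs ws] by simp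
  qed
  ultimately show ?thesis unfolding representative_functions_def by auto
qed

lemma pairing_scale_diff:
  "pairing ((a *\<^sub>R x + u) - (a *\<^sub>R y + u)) ((b *\<^sub>R xs + us) - (b *\<^sub>R ys + us)) = a * b * pairing (x - y) (xs - ys)"
  unfolding pairing_def by (simp add: scaleR_diff_right[symmetric] blinfun.scaleR_left blinfun.scaleR_right)

lemma pairing_scale2:
  "pairing (a *\<^sub>R x - a *\<^sub>R y) (b *\<^sub>R xs - b *\<^sub>R ys) = a * b * pairing (x - y) (xs - ys)"
  unfolding pairing_def by (simp add: scaleR_diff_right[symmetric] blinfun.scaleR_left blinfun.scaleR_right)

lemma mono_transfer:
  assumes "monotone_op G" "a > 0" "b > 0"
  shows "monotone_op ((\<lambda>(x, xs). (a *\<^sub>R x + u, b *\<^sub>R xs + us)) ` G)"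
  using assms unfolding monotone_op_def
  by (fastforce simp: pairing_scale2 intro!: mult_nonneg_nonneg)

lemma mm_transfer:
  fixes G :: "('a::real_normed_vector \<times> ('a \<Rightarrow>\<^sub>L real)) set"
  assumes l: "l1 > 0" "l2 > 0" and G: "maximal_monotone G"
  shows "maximal_monotone (Tm l1 l2 w ws ` G)"
proof -
  have Teq: "Tm l1 l2 w ws = (\<lambda>(x, xs). (l1 *\<^sub>R x + (- w), l2 *\<^sub>R xs + (- ws)))"
    unfolding Tm_def by auto
  have Tieq: "Ti l1 l2 w ws = (\<lambda>(x, xs). ((1/l1) *\<^sub>R x + (1/l1) *\<^sub>R w, (1/l2) *\<^sub>R xs + (1/l2) *\<^sub>R ws))"
    unfolding Ti_def by (auto simp: scaleR_add_right)
  have mG: "monotone_op G" using G unfolding maximal_monotone_def by blast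
  have "monotone_op (Tm l1 l2 w ws ` G)"
    unfolding Teq using mono_transfer[OF mG l] .
  moreover have "G' = Tm l1 l2 w ws ` G" if G': "monotone_op G'" "Tm l1 l2 w ws ` G \<subseteq> G'" for G'
  proof -
    have "monotone_op (Ti l1 l2 w ws ` G')"
      unfolding Tieq using mono_transfer[OF G'(1)] l by simp
    moreover have "G \<subseteq> Ti l1 l2 w ws ` G'"
    proof
      fix p assume "p \<in> G"
      hence "Tm l1 l2 w ws p \<in> G'" using G'(2) by blast
      thus "p \<in> Ti l1 l2 w ws ` G'" using Ti_Tm[OF l, of w ws p] by force
    qed
    ultimately have "Ti l1 l2 w ws ` G' = G" using G unfolding maximal_monotone_def by blast
    hence "Tm l1 l2 w ws ` Ti l1 l2 w ws ` G' = Tm l1 l2 w ws ` G" by simp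
    moreover have "Tm l1 l2 w ws ` Ti l1 l2 w ws ` G' = G'"
      by (simp add: image_image Tm_Ti[OF l])
    ultimately show ?thesis by simp
  qed
  ultimately show ?thesis unfolding maximal_monotone_def by blast
qed

lemma kk_inj:
  assumes l: "l1 > 0" "l2 > 0" and e: "kk l1 l2 w ws h = kk l1 l2 w ws f"
  shows "h = f"
proof
  fix q
  have "kk l1 l2 w ws h (Ti l1 l2 w ws q) = kk l1 l2 w ws f (Ti l1 l2 w ws q)" using e by simp
  hence "ereal (1 / (l1 * l2)) * h q + ereal (cc l1 l2 w ws (Ti l1 l2 w ws q)) = ereal (1 / (l1 * l2)) * f q + ereal (cc l1 l2 w ws (Ti l1 l2 w ws q))"
    unfolding kk_def Tm_Ti[OF l] by simp
  thus "h q = f q" using l by (cases "h q"; cases "f q") auto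
qed

theorem proposition3p2:
  fixes A :: "('a::banach \<times> ('a \<Rightarrow>\<^sub>L real)) set"
    and l1 l2 :: real and w :: 'a and ws :: "'a \<Rightarrow>\<^sub>L real"
  assumes "maximal_monotone A"
    and "representative_functions A = {fitzpatrick A}"
    and "l1 > 0" and "l2 > 0"
  shows "maximal_monotone ((\<lambda>(x, xs). (l1 *\<^sub>R x - w, l2 *\<^sub>R xs - ws)) ` A)
     \<and> representative_functions ((\<lambda>(x, xs). (l1 *\<^sub>R x - w, l2 *\<^sub>R xs - ws)) ` A)
         = {fitzpatrick ((\<lambda>(x, xs). (l1 *\<^sub>R x - w, l2 *\<^sub>R xs - ws)) ` A)}"
proof -
  have l: "l1 > 0" "l2 > 0" by fact+
  have eq: "(\<lambda>(x, xs). (l1 *\<^sub>R x - w, l2 *\<^sub>R xs - ws)) = Tm l1 l2 w ws"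
    unfolding Tm_def ..
  let ?B = "Tm l1 l2 w ws ` A"
  have mB: "maximal_monotone ?B" using mm_transfer[OF l assms(1)] .
  have fB: "fitzpatrick ?B \<in> representative_functions ?B" using fitz_rep[OF mB] .
  have "representative_functions ?B = {fitzpatrick ?B}"
  proof (intro equalityI subsetI)
    fix h assume h: "h \<in> representative_functions ?B"
    have "kk l1 l2 w ws h = fitzpatrick A" using kk_rep[OF l h] assms(2) by blast
    moreover have "kk l1 l2 w ws (fitzpatrick ?B) = fitzpatrick A" using kk_rep[OF l fB] assms(2) by blast
    ultimately have "h = fitzpatrick ?B" using kk_inj[OF l] by metis
    thus "h \<in> {fitzpatrick ?B}" by simp
  qed (use fB in simp)
  with mB show ?thesis unfolding eq by simp
qed

end
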